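(* Let $O$ be an order with property (itov) such that its neighbourhood order $N(O)$ contains no infinite strictly decreasing sequence, and let $\alpha$ be the order type of a well-ordered linear extension of $N(O)$. Then $O$ has a total binary questionable representation of length at most $2\cdot\alpha+1$ (ordinal product: $\alpha$ copies of $2$); more precisely, an order embedding of $O$ into $\mathrm{Next}(2,2\cdot\alpha+1,(O^{0,1})_{2\cdot\alpha+1})$.
   Context: Orders are partial orders; $x\sim y$ means $x\ne y$ and $x,y$ incomparable. $O_{obs1}$ is the order on $\{a,b,c,d\}$ whose only comparabilities are $a<b$, $c<d$; $O_{obs2}$ is the order on $\{a,b,c,d\}$ whose only comparabilities are $a<b$, $c<d$, $c<b$. An order has property (itov) iff it has no induced suborder isomorphic to $O_{obs1}$ or $O_{obs2}$. For $x$ let $D(x)=\{z:z<x\}$, $U(x)=\{z:z>x\}$. The neighbourhood order $N(O)$ has the same domain as $O$ with $x<_{N(O)}y$ iff $D(x)\subseteq D(y)$, $U(x)\subseteq U(y)$ and at least one of these inclusions is strict. $O^{0,1}$ is the two-element total order $0<1$. For an ordinal $j$, $\mathcal O_j=(O_k)_{k<j}$ is a sequence of orders; $(O')_j$ is the constant sequence. A word of length $\ell\le j$ is a sequence $(x_k)_{k<\ell}$ with $x_k\in\mathrm{Dom}(O_k)$. The question of two words $X,Y$ is $(k,x_k,y_k)$ for the least $k<\min(\mathrm{len}X,\mathrm{len}Y)$ with $x_k\neq y_k$, if it exists. $\mathrm{Next}(i,j,\mathcal O_j)$ ($i<j$) is the partial order on all words of length $\ell$ with $i\le \ell<j$ where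 $X<Y$ iff they have a question $(k,x_k,y_k)$ with $x_k<y_k$ in $O_k$, and words without a question or with question items incomparable are incomparable. A questionable representation of $O$ is an injective map $f$ into some $\mathrm{Next}(i,j,\mathcal O_j)$ with $f(x)<f(y)\iff x<y$; its length is $j$, its width the supremum of $|\mathrm{Dom}(O_k)|$; it is total if all $O_k$ are total orders, binary if total of width 2. *)

theory Defs
  imports Main
begin

definition strict_order_on :: "'a set \<Rightarrow> ('a \<Rightarrow> 'a \<Rightarrow> bool) \<Rightarrow> bool" where
  "strict_order_on X lt \<longleftrightarrow>
     (\<forall>x\<in>X. \<not> lt x x) \<and>
     (\<forall>x\<in>X. \<forall>y\<in>X. \<forall>z\<in>X. lt x y \<longrightarrow> lt y z \<longrightarrow> lt x z)"

definition incomp :: "('a \<Rightarrow> 'a \<Rightarrow> bool) \<Rightarrow> 'a \<Rightarrow> 'a \<Rightarrow> bool" where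
  "incomp lt x y \<longleftrightarrow> x \<noteq> y \<and> \<not> lt x y \<and> \<not> lt y x"

definition induced_obs1 :: "('a \<Rightarrow> 'a \<Rightarrow> bool) \<Rightarrow> 'a \<Rightarrow> 'a \<Rightarrow> 'a \<Rightarrow> 'a \<Rightarrow> bool" where
  "induced_obs1 lt a b c d \<longleftrightarrow>
     a \<noteq> b \<and> c \<noteq> d \<and> lt a b \<and> \<not> lt b a \<and> lt c d \<and> \<not> lt d c \<and>
     incomp lt a c \<and> incomp lt a d \<and> incomp lt b c \<and> incomp lt b d"

definition induced_obs2 :: "('a \<Rightarrow> 'a \<Rightarrow> bool) \<Rightarrow> 'a \<Rightarrow> 'a \<Rightarrow> 'a \<Rightarrow> 'a \<Rightarrow> bool" where
  "induced_obs2 lt a b c d \<longleftrightarrow>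
     a \<noteq> b \<and> c \<noteq> d \<and> c \<noteq> b \<and>
     lt a b \<and> \<not> lt b a \<and> lt c d \<and> \<not> lt d c \<and> lt c b \<and> \<not> lt b c \<and>
     incomp lt a c \<and> incomp lt a d \<and> incomp lt b d"

definition itov :: "'a set \<Rightarrow> ('a \<Rightarrow> 'a \<Rightarrow> bool) \<Rightarrow> bool" where
  "itov X lt \<longleftrightarrow>
     \<not> (\<exists>a\<in>X. \<exists>b\<in>X. \<exists>c\<in>X. \<exists>d\<in>X. induced_obs1 lt a b c d \<or> induced_obs2 lt a b c d)"

definition downset :: "'a set \<Rightarrow> ('a \<Rightarrow> 'a \<Rightarrow> bool) \<Rightarrow> 'a \<Rightarrow> 'a set" where
  "downset X lt x = {z \<in> X. lt z x}"

definition upset :: "'a set \<Rightarrow> ('a \<Rightarrow> 'a \<Rightarrow> bool) \<Rightarrow> 'a \<Rightarrow> 'a set" where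
  "upset X lt x = {z \<in> X. lt x z}"

definition N_less :: "'a set \<Rightarrow> ('a \<Rightarrow> 'a \<Rightarrow> bool) \<Rightarrow> 'a \<Rightarrow> 'a \<Rightarrow> bool" where
  "N_less X lt x y \<longleftrightarrow>
     downset X lt x \<subseteq> downset X lt y \<and> upset X lt x \<subseteq> upset X lt y \<and>
     (downset X lt x \<noteq> downset X lt y \<or> upset X lt x \<noteq> upset X lt y)"

text \<open>Index positions of the ordinal 2*alpha+1, where alpha is the order type of the
  well-order W on X: position Some (x, i) (i = False, True) for the two copies of x,
  ordered lexicographically with x major, and None for the final (top) position.\<close>
definition idx_set :: "'a set \<Rightarrow> ('a \<times> bool) option set" where
  "idx_set X = Some ` (X \<times> UNIV) \<union> {None}"

fun idx_less :: "('a \<times> 'a) set \<Rightarrow> ('a \<times> bool) option \<Rightarrow> ('a \<times> bool) option \<Rightarrow> bool" where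
  "idx_less W (Some (x, i)) (Some (y, j)) \<longleftrightarrow>
     ((x, y) \<in> W \<and> x \<noteq> y) \<or> (x = y \<and> \<not> i \<and> j)"
| "idx_less W (Some _) None \<longleftrightarrow> True"
| "idx_less W None _ \<longleftrightarrow> False"

text \<open>Words: partial maps from an initial segment {k. k < a} of the index set
  (a in the index set, so the length is < j) into the value domains.
  Next(2, j, ...) consists of words of length at least 2 and less than j.\<close>
definition next2_words :: "'i set \<Rightarrow> ('i \<Rightarrow> 'i \<Rightarrow> bool) \<Rightarrow> ('i \<Rightarrow> 'v set) \<Rightarrow> ('i \<rightharpoonup> 'v) set" where
  "next2_words I ilt V =
     {w. (\<exists>a\<in>I. dom w = {k \<in> I. ilt k a}) \<and>
         (\<exists>p q. p \<noteq> q \<and> p \<in> dom w \<and> q \<in> dom w) \<and>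
         (\<forall>k\<in>dom w. the (w k) \<in> V k)}"

text \<open>v < w in Next iff their question (k, v_k, w_k) exists (least common index where
  they differ) and v_k < w_k in O_k.\<close>
definition next_less :: "('i \<Rightarrow> 'i \<Rightarrow> bool) \<Rightarrow> ('i \<Rightarrow> 'v \<Rightarrow> 'v \<Rightarrow> bool) \<Rightarrow> ('i \<rightharpoonup> 'v) \<Rightarrow> ('i \<rightharpoonup> 'v) \<Rightarrow> bool" where
  "next_less ilt vlt v w \<longleftrightarrow>
     (\<exists>k. k \<in> dom v \<and> k \<in> dom w \<and> v k \<noteq> w k \<and>
          (\<forall>p. ilt p k \<longrightarrow> v p = w p) \<and>
          vlt k (the (v k)) (the (w k)))"

definition O01_less :: "bool \<Rightarrow> bool \<Rightarrow> bool" where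
  "O01_less a b \<longleftrightarrow> \<not> a \<and> b"

end

theory Submission
  imports Defs
begin

lemma key:
  assumes so: "strict_order_on X lt" and it: "itov X lt"
    and X: "x \<in> X" "y \<in> X" "w \<in> X"
    and inc: "\<not> lt x y" "\<not> lt y x" "x \<noteq> y"
    and c: "(lt w y \<and> \<not> lt w x) \<or> (lt y w \<and> \<not> lt x w)"
  shows "N_less X lt x w"
proof -
  have irr: "\<And>a. a \<in> X \<Longrightarrow> \<not> lt a a" using so by (simp add: strict_order_on_def)
  have tr: "\<And>a b c. a \<in> X \<Longrightarrow> b \<in> X \<Longrightarrow> c \<in> X \<Longrightarrow> lt a b \<Longrightarrow> lt b c \<Longrightarrow> lt a c"
    using so unfolding strict_order_on_def by blast
  have o1: "\<And>a b c d. a \<in> X \<Longrightarrow> b \<in> X \<Longrightarrow> c \<in> X \<Longrightarrow> d \<in> X \<Longrightarrow> \<not> induced_obs1 lt a b c d"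
    using it unfolding itov_def by blast
  have o2: "\<And>a b c d. a \<in> X \<Longrightarrow> b \<in> X \<Longrightarrow> c \<in> X \<Longrightarrow> d \<in> X \<Longrightarrow> \<not> induced_obs2 lt a b c d"
    using it unfolding itov_def by blast
  from c show ?thesis
  proof
    assume A: "lt w y \<and> \<not> lt w x"
    have wx: "\<not> lt x w" using A inc tr X by blast
    have U: "upset X lt x \<subseteq> upset X lt w"
    proof
      fix u assume "u \<in> upset X lt x"
      hence u: "u \<in> X" "lt x u" by (auto simp: upset_def)
      show "u \<in> upset X lt w"
      proof (rule ccontr)
        assume "u \<notin> upset X lt w"
        hence nwu: "\<not> lt w u" using u by (simp add: upset_def)
        have "induced_obs1 lt x u w y"
          unfolding induced_obs1_def incomp_def
          using A wx nwu u inc X irr tr by metis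
        thus False using o1 u X by blast
      qed
    qed
    have D: "downset X lt x \<subseteq> downset X lt w"
    proof
      fix c assume "c \<in> downset X lt x"
      hence cc: "c \<in> X" "lt c x" by (auto simp: downset_def)
      show "c \<in> downset X lt w"
      proof (rule ccontr)
        assume "c \<notin> downset X lt w"
        hence ncw: "\<not> lt c w" using cc by (simp add: downset_def)
        show False
        proof (cases "lt c y")
          case False
          have "induced_obs1 lt c x w y"
            unfolding induced_obs1_def incomp_def
            using A wx ncw cc inc X irr tr False by metis
          thus False using o1 cc X by blast
        next
          case True
          have "induced_obs2 lt w y c x"
            unfolding induced_obs2_def incomp_def
            using A wx ncw cc inc X irr tr True by metis
          thus False using o2 cc X by blast
        qed
      qed
    qed
    have "y \<in> upset X lt w" "y \<notin> upset X lt x" using A inc X by (auto simp: upset_def)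
    thus ?thesis using U D unfolding N_less_def by blast
  next
    assume B: "lt y w \<and> \<not> lt x w"
    have wx: "\<not> lt w x" using B inc tr X by blast
    have D: "downset X lt x \<subseteq> downset X lt w"
    proof
      fix c assume "c \<in> downset X lt x"
      hence cc: "c \<in> X" "lt c x" by (auto simp: downset_def)
      show "c \<in> downset X lt w"
      proof (rule ccontr)
        assume "c \<notin> downset X lt w"
        hence ncw: "\<not> lt c w" using cc by (simp add: downset_def)
        have "induced_obs1 lt c x y w"
          unfolding induced_obs1_def incomp_def
          using B wx ncw cc inc X irr tr by metis
        thus False using o1 cc X by blast
      qed
    qed
    have U: "upset X lt x \<subseteq> upset X lt w"
    proof
      fix u assume "u \<in> upset X lt x"
      hence u: "u \<in> X" "lt x u" by (auto simp: upset_def)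
      show "u \<in> upset X lt w"
      proof (rule ccontr)
        assume "u \<notin> upset X lt w"
        hence nwu: "\<not> lt w u" using u by (simp add: upset_def)
        show False
        proof (cases "lt y u")
          case False
          have "induced_obs1 lt x u y w"
            unfolding induced_obs1_def incomp_def
            using B wx nwu u inc X irr tr False by metis
          thus False using o1 u X by blast
        next
          case True
          have "induced_obs2 lt x u y w"
            unfolding induced_obs2_def incomp_def
            using B wx nwu u inc X irr tr True by metis
          thus False using o2 u X by blast
        qed
      qed
    qed
    have "y \<in> downset X lt w" "y \<notin> downset X lt x" using B inc X by (auto simp: downset_def)
    thus ?thesis using U D unfolding N_less_def by blast
  qed
qed


definition bv :: "('a \<Rightarrow> 'a \<Rightarrow> bool) \<Rightarrow> 'a \<Rightarrow> 'a \<Rightarrow> bool \<Rightarrow> bool" where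
  "bv lt z w i = (if i then \<not> lt z w else lt w z)"

definition fw :: "('a \<times> 'a) set \<Rightarrow> ('a \<Rightarrow> 'a \<Rightarrow> bool) \<Rightarrow> 'a \<Rightarrow> ('a \<times> bool) option \<Rightarrow> bool option" where
  "fw W lt x k = (case k of None \<Rightarrow> None | Some (w, i) \<Rightarrow> if (w, x) \<in> W then Some (bv lt x w i) else None)"

lemma L1:
  assumes so: "strict_order_on X lt" and it: "itov X lt" and wo: "well_order_on X W"
    and NW: "\<forall>x\<in>X. \<forall>y\<in>X. N_less X lt x y \<longrightarrow> (x, y) \<in> W"
    and X: "x \<in> X" "y \<in> X" "w \<in> X"
    and inc: "\<not> lt x y" "\<not> lt y x"
    and xy: "(x, y) \<in> W" and wx: "(w, x) \<in> W"
  shows "lt w x = lt w y \<and> lt x w = lt y w"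
proof (cases "x = y")
  case True thus ?thesis by simp
next
  case ne: False
  have tW: "trans W" and aW: "antisym W" using wo
    unfolding well_order_on_def linear_order_on_def partial_order_on_def preorder_on_def by auto
  show ?thesis
  proof (rule ccontr)
    assume H: "\<not> ?thesis"
    show False
    proof (cases "(lt w y \<and> \<not> lt w x) \<or> (lt y w \<and> \<not> lt x w)")
      case True
      have "N_less X lt x w" using key[OF so it X inc ne True] .
      hence "(x, w) \<in> W" using NW X by blast
      hence "w = x" using wx aW by (meson antisymD)
      thus False using True inc by blast
    next
      case False
      hence c2: "(lt w x \<and> \<not> lt w y) \<or> (lt x w \<and> \<not> lt y w)" using H by blast
      have "N_less X lt y w" using key[OF so it X(2) X(1) X(3) inc(2) inc(1) ne[symmetric] c2] .
      hence "(y, w) \<in> W" using NW X by blast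
      hence "(y, x) \<in> W" using wx tW by (meson transD)
      hence "x = y" using xy aW by (meson antisymD)
      thus False using ne by blast
    qed
  qed
qed

theorem theorem4p4:
  fixes X :: "'a set" and lt :: "'a \<Rightarrow> 'a \<Rightarrow> bool" and W :: "('a \<times> 'a) set"
  assumes "strict_order_on X lt"
    and "itov X lt"
    and "\<not> (\<exists>s :: nat \<Rightarrow> 'a. \<forall>n. s n \<in> X \<and> N_less X lt (s (Suc n)) (s n))"
    and "well_order_on X W"
    and "\<forall>x\<in>X. \<forall>y\<in>X. N_less X lt x y \<longrightarrow> (x, y) \<in> W"
  shows "\<exists>f. inj_on f X \<and>
           f ` X \<subseteq> next2_words (idx_set X) (idx_less W) (\<lambda>_. UNIV) \<and>
           (\<forall>x\<in>X. \<forall>y\<in>X.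
              next_less (idx_less W) (\<lambda>_. O01_less) (f x) (f y) \<longleftrightarrow> lt x y)"
proof -
  note so = assms(1) and it = assms(2) and wo = assms(4) and NW = assms(5)
  have irr: "\<And>a. a \<in> X \<Longrightarrow> \<not> lt a a" using so by (simp add: strict_order_on_def)
  have tr: "\<And>a b c. a \<in> X \<Longrightarrow> b \<in> X \<Longrightarrow> c \<in> X \<Longrightarrow> lt a b \<Longrightarrow> lt b c \<Longrightarrow> lt a c"
    using so unfolding strict_order_on_def by blast
  have sub: "W \<subseteq> X \<times> X" and rW: "\<And>x. x \<in> X \<Longrightarrow> (x, x) \<in> W" and tW: "trans W"
    and aW: "antisym W" and toW: "total_on X W" and wfW: "wf (W - Id)"
    using wo unfolding well_order_on_def linear_order_on_def partial_order_on_def preorder_on_def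
      refl_on_def by auto
  let ?f = "fw W lt"
  have domf: "\<And>x. dom (?f x) = Some ` ({w. (w, x) \<in> W} \<times> UNIV)"
    by (auto simp: fw_def dom_def split: option.splits if_splits)
  have fval: "\<And>x w i. (w, x) \<in> W \<Longrightarrow> ?f x (Some (w, i)) = Some (bv lt x w i)"
    by (simp add: fw_def)
  have inj: "inj_on ?f X"
  proof (rule inj_onI)
    fix x y assume xy: "x \<in> X" "y \<in> X" "?f x = ?f y"
    have "Some (x, True) \<in> dom (?f x)" using rW xy(1) by (simp add: domf)
    hence "Some (x, True) \<in> dom (?f y)" using xy by simp
    hence xyW: "(x, y) \<in> W" by (auto simp: domf)
    have "Some (y, True) \<in> dom (?f y)" using rW xy(2) by (simp add: domf)
    hence "Some (y, True) \<in> dom (?f x)" using xy by simp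
    hence "(y, x) \<in> W" by (auto simp: domf)
    thus "x = y" using xyW aW by (meson antisymD)
  qed
  have words: "?f x \<in> next2_words (idx_set X) (idx_less W) (\<lambda>_. UNIV)" if xX: "x \<in> X" for x
  proof -
    have A: "\<exists>a\<in>idx_set X. dom (?f x) = {k \<in> idx_set X. idx_less W k a}"
    proof (cases "\<exists>y. (x, y) \<in> W \<and> y \<noteq> x")
      case True
      then obtain y0 where "y0 \<in> {y. (x, y) \<in> W \<and> y \<noteq> x}" by blast
      then obtain s where s: "s \<in> {y. (x, y) \<in> W \<and> y \<noteq> x}"
        and smin: "\<And>y. (y, s) \<in> W - Id \<Longrightarrow> y \<notin> {y. (x, y) \<in> W \<and> y \<noteq> x}"
        by (rule wfE_min[OF wfW]) blast
      have sX: "s \<in> X" using s sub by auto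
      have m: "Some (s, False) \<in> idx_set X" using sX by (simp add: idx_set_def)
      have e: "dom (?f x) = {k \<in> idx_set X. idx_less W k (Some (s, False))}"
        proof (rule set_eqI)
          fix k show "k \<in> dom (?f x) \<longleftrightarrow> k \<in> {k \<in> idx_set X. idx_less W k (Some (s, False))}"
          proof (cases k)
            case None thus ?thesis by (simp add: domf)
          next
            case (Some p)
            obtain w i where p: "p = (w, i)" by force
            have "(w, x) \<in> W \<longleftrightarrow> w \<in> X \<and> (w, s) \<in> W \<and> w \<noteq> s"
            proof
              assume wx: "(w, x) \<in> W"
              have xs: "(x, s) \<in> W" and sx: "s \<noteq> x" using s by auto
              have ws: "(w, s) \<in> W" using transD[OF tW wx xs] .
              have "w \<noteq> s"
              proof
                assume "w = s"
                hence "(s, x) \<in> W" using wx by simp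
                hence "s = x" using antisymD[OF aW xs] by simp
                thus False using sx by simp
              qed
              moreover have "w \<in> X" using ws sub by blast
              ultimately show "w \<in> X \<and> (w, s) \<in> W \<and> w \<noteq> s" using ws by blast
            next
              assume H: "w \<in> X \<and> (w, s) \<in> W \<and> w \<noteq> s"
              show "(w, x) \<in> W"
              proof (rule ccontr)
                assume "(w, x) \<notin> W"
                have wnx: "w \<noteq> x" using \<open>(w, x) \<notin> W\<close> xX rW by blast
                have "(x, w) \<in> W \<or> (w, x) \<in> W" using toW H xX wnx unfolding total_on_def by blast
                hence "(x, w) \<in> W \<and> w \<noteq> x" using \<open>(w, x) \<notin> W\<close> wnx by blast
                thus False using smin[of w] H by auto
              qed
            qed
            thus ?thesis using Some p by (auto simp: domf idx_set_def)
          qed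
        qed
      show ?thesis using e m by blast
    next
      case False
      have m: "None \<in> idx_set X" by (simp add: idx_set_def)
      have e: "dom (?f x) = {k \<in> idx_set X. idx_less W k None}"
        proof (rule set_eqI)
          fix k show "k \<in> dom (?f x) \<longleftrightarrow> k \<in> {k \<in> idx_set X. idx_less W k None}"
          proof (cases k)
            case None thus ?thesis by (simp add: domf)
          next
            case (Some p)
            obtain w i where p: "p = (w, i)" by force
            have "(w, x) \<in> W \<longleftrightarrow> w \<in> X"
            proof
              assume "(w, x) \<in> W" thus "w \<in> X" using sub by blast
            next
              assume wX: "w \<in> X"
              show "(w, x) \<in> W"
              proof (cases "w = x")
                case True thus ?thesis using rW xX by simp
              next
                case ne: False
                hence "(x, w) \<in> W \<or> (w, x) \<in> W" using toW wX xX unfolding total_on_def by blast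
                thus ?thesis using False ne by blast
              qed
            qed
            thus ?thesis using Some p by (auto simp: domf idx_set_def)
          qed
        qed
      show ?thesis using e m by blast
    qed
    have d1: "Some (x, True) \<in> dom (?f x)" and d2: "Some (x, False) \<in> dom (?f x)"
      using rW xX by (auto simp: domf)
    have B: "\<exists>p q. p \<noteq> q \<and> p \<in> dom (?f x) \<and> q \<in> dom (?f x)"
      by (rule exI[of _ "Some (x, True)"], rule exI[of _ "Some (x, False)"]) (simp add: d1 d2)
    show ?thesis unfolding next2_words_def
    proof (intro CollectI conjI)
      show "\<exists>a\<in>idx_set X. dom (?f x) = {k \<in> idx_set X. idx_less W k a}" by (rule A)
      show "\<exists>p q. p \<noteq> q \<and> p \<in> dom (?f x) \<and> q \<in> dom (?f x)" by (rule B)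
      show "\<forall>k\<in>dom (?f x). the (?f x k) \<in> UNIV" by simp
    qed
  qed
  have ord: "next_less (idx_less W) (\<lambda>_. O01_less) (?f x) (?f y) \<longleftrightarrow> lt x y"
    if xX: "x \<in> X" and yX: "y \<in> X" for x y
  proof
    assume "next_less (idx_less W) (\<lambda>_. O01_less) (?f x) (?f y)"
    then obtain k where k: "k \<in> dom (?f x)" "k \<in> dom (?f y)"
      and ol: "O01_less (the (?f x k)) (the (?f y k))"
      unfolding next_less_def by blast
    obtain w i where kk: "k = Some (w, i)" and wx: "(w, x) \<in> W" and wy: "(w, y) \<in> W"
      using k by (auto simp: domf)
    have wX: "w \<in> X" using wx sub by auto
    have e1: "?f x k = Some (bv lt x w i)" using kk fval[OF wx] by simp
    have e2: "?f y k = Some (bv lt y w i)" using kk fval[OF wy] by simp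
    have "O01_less (bv lt x w i) (bv lt y w i)" using ol unfolding e1 e2 by simp
    hence vals: "\<not> bv lt x w i" "bv lt y w i" by (simp_all add: O01_less_def)
    show "lt x y"
    proof (rule ccontr)
      assume nxy: "\<not> lt x y"
      show False
      proof (cases "lt y x")
        case True
        show False
        proof (cases i)
          case True
          hence "lt x w" "\<not> lt y w" using vals by (simp_all add: bv_def)
          thus False using tr[OF yX xX wX \<open>lt y x\<close>] by blast
        next
          case False
          hence "\<not> lt w x" "lt w y" using vals by (simp_all add: bv_def)
          thus False using tr[OF wX yX xX _ \<open>lt y x\<close>] by blast
        qed
      next
        case False
        have "lt w x = lt w y \<and> lt x w = lt y w"
        proof (cases "(x, y) \<in> W")
          case True thus ?thesis using L1[OF so it wo NW xX yX wX nxy False True wx] by blast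
        next
          case c: False
          have "(y, x) \<in> W"
          proof (cases "x = y")
            case True thus ?thesis using rW yX by simp
          next
            case False thus ?thesis using toW xX yX c unfolding total_on_def by blast
          qed
          thus ?thesis using L1[OF so it wo NW yX xX wX False nxy _ wy] by auto
        qed
        thus False using vals by (auto simp: bv_def split: if_splits)
      qed
    qed
  next
    assume lxy: "lt x y"
    define m where "m = (if (x, y) \<in> W then x else y)"
    have tot: "(x, y) \<in> W \<or> (y, x) \<in> W"
    proof (cases "x = y")
      case True thus ?thesis using rW yX by simp
    next
      case False thus ?thesis using toW xX yX unfolding total_on_def by blast
    qed
    have mx: "(m, x) \<in> W" and my: "(m, y) \<in> W"
      using tot xX yX rW unfolding m_def by auto
    define S where "S = {w. (w, m) \<in> W \<and> (lt w x \<noteq> lt w y \<or> lt x w \<noteq> lt y w)}"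
    have "m \<in> S"
      using lxy xX yX irr rW unfolding S_def m_def by auto
    then obtain w0 where w0: "w0 \<in> S" and wmin: "\<And>v. (v, w0) \<in> W - Id \<Longrightarrow> v \<notin> S"
      by (rule wfE_min[OF wfW]) blast
    have w0m: "(w0, m) \<in> W" using w0 by (simp add: S_def)
    have w0x: "(w0, x) \<in> W" using transD[OF tW w0m mx] .
    have w0y: "(w0, y) \<in> W" using transD[OF tW w0m my] .
    have w0X: "w0 \<in> X" using w0x sub by auto
    define i0 where "i0 = (lt w0 x = lt w0 y)"
    let ?k = "Some (w0, i0)"
    have diff: "bv lt x w0 i0 \<noteq> bv lt y w0 i0" using w0 unfolding S_def i0_def bv_def by auto
    have orient: "\<not> bv lt x w0 i0 \<and> bv lt y w0 i0"
      using diff tr[OF w0X xX yX _ lxy] tr[OF xX yX w0X lxy] unfolding bv_def i0_def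
      by (auto split: if_splits)
    show "next_less (idx_less W) (\<lambda>_. O01_less) (?f x) (?f y)"
      unfolding next_less_def
    proof (intro exI[of _ ?k] conjI allI impI)
      show "?k \<in> dom (?f x)" "?k \<in> dom (?f y)" using w0x w0y by (auto simp: domf)
      show "?f x ?k \<noteq> ?f y ?k" using diff fval[OF w0x] fval[OF w0y] by simp
      show "O01_less (the (?f x ?k)) (the (?f y ?k))"
        using orient fval[OF w0x] fval[OF w0y] by (simp add: O01_less_def)
    next
      fix p assume pk: "idx_less W p ?k"
      show "?f x p = ?f y p"
      proof (cases p)
        case None thus ?thesis using pk by simp
      next
        case (Some q)
        obtain v j where q: "q = (v, j)" by force
        have "((v, w0) \<in> W \<and> v \<noteq> w0) \<or> (v = w0 \<and> \<not> j \<and> i0)" using pk Some q by simp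
        thus ?thesis
        proof
          assume vw: "(v, w0) \<in> W \<and> v \<noteq> w0"
          have "v \<notin> S" using wmin vw by blast
          moreover have "(v, m) \<in> W" using transD[OF tW _ w0m] vw by blast
          moreover have vx: "(v, x) \<in> W" using transD[OF tW _ w0x] vw by blast
          moreover have vy: "(v, y) \<in> W" using transD[OF tW _ w0y] vw by blast
          ultimately show ?thesis using Some q fval[OF vx] fval[OF vy]
            unfolding S_def bv_def by auto
        next
          assume "v = w0 \<and> \<not> j \<and> i0"
          thus ?thesis using Some q fval[OF w0x] fval[OF w0y] unfolding i0_def bv_def by auto
        qed
      qed
    qed
  qed
  show ?thesis
    using inj words ord by (intro exI[of _ ?f]) blast
qed

end
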